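(* Let $q$ be a prime power and $r\ge1$ an integer with $(r+1)\mid(q+1)$. Let $s$ be an integer with $2\le s\le\frac{q+1}{r+1}$ and $1\le t\le s$. Then there exists an $\mathbb{F}_q$-linear code of length $n=s(r+1)+1$, dimension $k=rt$ and locality $r$ whose minimum distance $d$ satisfies $d\ge n-rt-t+1$.
   Context: A linear code $C\subseteq\mathbb{F}_q^n$ has locality $r$ if for every coordinate $i$ there is a set $I_i\subseteq\{1,\dots,n\}\setminus\{i\}$ with $|I_i|\le r$ such that any two codewords agreeing on the coordinates in $I_i$ also agree in coordinate $i$. *)

theory Defs
  imports Complex_Main "HOL-Library.Function_Algebras"
begin

text \<open>Words of length n over a field F are modelled as functions nat => F
  supported on the coordinate set {0..<n}. Scalar multiplication is pointwise.\<close>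

definition scl :: "'a::field \<Rightarrow> (nat \<Rightarrow> 'a) \<Rightarrow> (nat \<Rightarrow> 'a)" where
  "scl c v = (\<lambda>i. c * v i)"

lemma vector_space_scl: "vector_space (scl :: 'a::field \<Rightarrow> _)"
  by unfold_locales (auto simp: scl_def algebra_simps fun_eq_iff)

definition linear_code :: "nat \<Rightarrow> (nat \<Rightarrow> 'a::field) set \<Rightarrow> bool" where
  "linear_code n C \<longleftrightarrow> module.subspace scl C \<and> (\<forall>v\<in>C. \<forall>i. n \<le> i \<longrightarrow> v i = 0)"

definition code_dim :: "(nat \<Rightarrow> 'a::field) set \<Rightarrow> nat" where
  "code_dim C = vector_space.dim scl C"

definition hamming_dist :: "nat \<Rightarrow> (nat \<Rightarrow> 'a) \<Rightarrow> (nat \<Rightarrow> 'a) \<Rightarrow> nat" where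
  "hamming_dist n x y = card {i\<in>{0..<n}. x i \<noteq> y i}"

definition min_dist :: "nat \<Rightarrow> (nat \<Rightarrow> 'a) set \<Rightarrow> nat" where
  "min_dist n C = Min {hamming_dist n x y | x y. x \<in> C \<and> y \<in> C \<and> x \<noteq> y}"

definition has_locality :: "nat \<Rightarrow> nat \<Rightarrow> (nat \<Rightarrow> 'a) set \<Rightarrow> bool" where
  "has_locality n r C \<longleftrightarrow> (\<forall>i<n. \<exists>I. I \<subseteq> {0..<n} - {i} \<and> card I \<le> r \<and>
     (\<forall>x\<in>C. \<forall>y\<in>C. (\<forall>j\<in>I. x j = y j) \<longrightarrow> x i = y i))"

end

theory Submission
  imports Defs "HOL-Algebra.Multiplicative_Group" "HOL-Computational_Algebra.Polynomial"
begin

definition kmul :: "'a::field \<Rightarrow> 'a \<Rightarrow> 'a \<times> 'a \<Rightarrow> 'a \<times> 'a \<Rightarrow> 'a \<times> 'a" where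
 "kmul a b z w = (fst z * fst w + b * snd z * snd w, fst z * snd w + snd z * fst w + a * snd z * snd w)"

definition KR :: "'a::field \<Rightarrow> 'a \<Rightarrow> ('a \<times> 'a) ring" where
 "KR a b = \<lparr>carrier = UNIV, monoid.mult = kmul a b, one = (1,0), zero = (0,0),
    add = (\<lambda>z w. (fst z + fst w, snd z + snd w))\<rparr>"

lemma KR_cring: "cring (KR a b)"
proof (rule cringI)
  show "abelian_group (KR a b)"
  proof (rule abelian_groupI)
    fix x :: "'a \<times> 'a" assume "x \<in> carrier (KR a b)"
    show "\<exists>y\<in>carrier (KR a b). y \<oplus>\<^bsub>KR a b\<^esub> x = \<zero>\<^bsub>KR a b\<^esub>"
      by (rule bexI[of _ "(- fst x, - snd x)"]) (auto simp: KR_def)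
  qed (auto simp: KR_def algebra_simps)
  show "comm_monoid (KR a b)"
    by (rule comm_monoidI) (auto simp: KR_def kmul_def algebra_simps)
qed (auto simp: KR_def kmul_def algebra_simps)

lemma KR_field:
  fixes a b :: "'a::field"
  assumes irr: "\<forall>u. u*u \<noteq> a*u + b"
  shows "field (KR a b)"
proof (rule cring.cring_fieldI2[OF KR_cring])
  show "\<zero>\<^bsub>KR a b\<^esub> \<noteq> \<one>\<^bsub>KR a b\<^esub>" by (simp add: KR_def)
next
  fix z :: "'a \<times> 'a" assume "z \<noteq> \<zero>\<^bsub>KR a b\<^esub>"
  then obtain x y where z: "z = (x,y)" and nz: "(x,y) \<noteq> (0,0)" by (cases z) (auto simp: KR_def)
  define N where "N = x*x + a*x*y - b*y*y"
  have "N \<noteq> 0"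
  proof
    assume N0: "N = 0"
    show False
    proof (cases "y = 0")
      case True
      then show False using N0 nz by (simp add: N_def)
    next
      case False
      define u where "u = - x / y"
      have "u*u - (a*u + b) = N / (y*y)"
        using False by (simp add: u_def N_def field_simps)
      then have "u*u = a*u + b" using N0 by simp
      then show False using irr by blast
    qed
  qed
  show "\<exists>w\<in>carrier (KR a b). z \<otimes>\<^bsub>KR a b\<^esub> w = \<one>\<^bsub>KR a b\<^esub>"
  proof (rule bexI[of _ "((x + a*y)/N, - y / N)"])
    have e1: "x * ((x + a*y)/N) + b * y * (- y / N) = N / N"
      by (simp add: N_def field_simps)
    have e2: "x * (- y / N) + y * ((x + a*y)/N) + a * y * (- y / N) = 0"
      by (simp add: field_simps add_divide_distrib[symmetric] diff_divide_distrib[symmetric])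
    show "z \<otimes>\<^bsub>KR a b\<^esub> ((x + a*y)/N, - y / N) = \<one>\<^bsub>KR a b\<^esub>"
      using e1 e2 \<open>N \<noteq> 0\<close> by (simp add: KR_def kmul_def z)
  qed (simp add: KR_def)
qed

lemma fermat_fin:
  fixes c :: "'a::{finite,field}"
  assumes "c \<noteq> 0"
  shows "c ^ (card (UNIV::'a set) - 1) = 1"
proof -
  let ?U = "UNIV - {0::'a}"
  have bij: "bij_betw (\<lambda>x. c * x) ?U ?U"
    unfolding bij_betw_def inj_on_def image_def using assms
    apply auto apply (rule_tac x="x/c" in bexI) apply auto done
  have "(\<Prod>x\<in>?U. c * x) = (\<Prod>x\<in>?U. x)"
    using prod.reindex_bij_betw[OF bij, of "\<lambda>x. x"] by simp
  moreover have "(\<Prod>x\<in>?U. c * x) = c ^ card ?U * (\<Prod>x\<in>?U. x)"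
    by (simp add: prod.distrib)
  moreover have "(\<Prod>x\<in>?U. x) \<noteq> 0" by simp
  moreover have "card ?U = card (UNIV::'a set) - 1" by (simp add: card_Diff_singleton)
  ultimately show ?thesis by simp
qed

lemma irr_exists:
  "\<exists>a b :: 'a::{finite,field}. \<forall>u. u*u \<noteq> a*u + b"
proof -
  let ?h = "\<lambda>u::'a. u*u - u"
  have "\<not> inj ?h"
    unfolding inj_def by (metis (no_types) diff_self mult_1 mult_zero_left zero_neq_one)
  then have "\<not> surj ?h" by (meson finite_UNIV finite_UNIV_surj_inj)
  then obtain b where "b \<notin> range ?h" by blast
  have "\<forall>u. u*u \<noteq> 1*u + b"
  proof (intro allI notI)
    fix u :: 'a assume "u*u = 1*u + b"
    then have "b = ?h u" by (simp add: algebra_simps)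
    then show False using \<open>b \<notin> range ?h\<close> by blast
  qed
  then show ?thesis by blast
qed

lemma gen_exists:
  fixes a b :: "'a::{finite,field}"
  assumes irr: "\<forall>u. u*u \<noteq> a*u + b"
  shows "\<exists>gg. (\<forall>z. z \<noteq> (0,0) \<longrightarrow> (\<exists>i::nat. z = gg [^]\<^bsub>KR a b\<^esub> i))
      \<and> (\<forall>i::nat. gg [^]\<^bsub>KR a b\<^esub> i = (1,0) \<longleftrightarrow> (card (UNIV::'a set) * card (UNIV::'a set) - 1) dvd i)
      \<and> (\<forall>i::nat. gg [^]\<^bsub>KR a b\<^esub> i \<noteq> (0,0))"
proof -
  interpret F: field "KR a b" by (rule KR_field[OF irr])
  have fin: "finite (carrier (KR a b))" by simp
  obtain gg where g: "gg \<in> carrier (mult_of (KR a b))"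
    and gen: "carrier (mult_of (KR a b)) = {gg[^]\<^bsub>KR a b\<^esub>i | i::nat . i \<in> UNIV}"
    using F.finite_field_mult_group_has_gen[OF fin] by blast
  interpret G: group "mult_of (KR a b)" by (rule F.field_mult_group)
  have cp: "card (UNIV :: ('a\<times>'a) set) = card(UNIV::'a set) * card (UNIV::'a set)"
    by (metis UNIV_Times_UNIV card_cartesian_product)
  have ordG: "Coset.order (mult_of (KR a b)) = card (UNIV::'a set) * card (UNIV::'a set) - 1"
    using F.order_mult_of[OF fin] by (simp add: Coset.order_def KR_def cp)
  have o1: "G.ord gg dvd card (UNIV::'a set) * card (UNIV::'a set) - 1"
    using G.ord_dvd_group_order[OF g] ordG by simp
  have "G.ord gg \<noteq> 0"
    using G.ord_ge_1[OF F.finite_mult_of[OF fin] g] by auto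
  have "carrier (mult_of (KR a b)) = {gg[^]\<^bsub>mult_of (KR a b)\<^esub>i | i::nat . i \<in> UNIV}"
    using gen by (simp add: nat_pow_mult_of)
  also have "... = {gg[^]\<^bsub>mult_of (KR a b)\<^esub>x | x. x \<in> {0 .. G.ord gg - 1}}"
    by (rule G.ord_elems[OF F.finite_mult_of[OF fin] g])
  also have "... = (\<lambda>x. gg[^]\<^bsub>mult_of (KR a b)\<^esub>x) ` {0 .. G.ord gg - 1}" by auto
  finally have "card (carrier (mult_of (KR a b))) \<le> card {0 .. G.ord gg - 1}"
    by (metis card_image_le finite_atLeastAtMost)
  then have "card (UNIV::'a set) * card (UNIV::'a set) - 1 \<le> G.ord gg"
    using ordG \<open>G.ord gg \<noteq> 0\<close> unfolding Coset.order_def by simp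
  moreover have "0 < card (UNIV::'a set) * card (UNIV::'a set) - 1"
  proof -
    have "card {0::'a, 1} \<le> card (UNIV::'a set)" by (rule card_mono) auto
    then have "2 \<le> card (UNIV::'a set)" by simp
    then have "4 \<le> card (UNIV::'a set) * card (UNIV::'a set)" using mult_le_mono by fastforce
    then show ?thesis by simp
  qed
  ultimately have ordg: "G.ord gg = card (UNIV::'a set) * card (UNIV::'a set) - 1"
    using o1 dvd_imp_le by (simp add: le_antisym)
  show ?thesis
  proof (intro exI[of _ gg] conjI allI impI)
    fix z :: "'a \<times> 'a" assume "z \<noteq> (0,0)"
    then have "z \<in> carrier (mult_of (KR a b))" by (simp add: KR_def)
    then have "z \<in> {gg [^]\<^bsub>KR a b\<^esub> i | i::nat. i \<in> UNIV}" by (simp only: gen)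
    then show "\<exists>i::nat. z = gg [^]\<^bsub>KR a b\<^esub> i" by blast
  next
    fix i :: nat
    show "gg [^]\<^bsub>KR a b\<^esub> i = (1,0) \<longleftrightarrow> (card (UNIV::'a set) * card (UNIV::'a set) - 1) dvd i"
      using G.pow_eq_id[OF g, of i] ordg by (simp add: nat_pow_mult_of KR_def)
  next
    fix i :: nat
    have "gg [^]\<^bsub>mult_of (KR a b)\<^esub> i \<in> carrier (mult_of (KR a b))"
      by (rule G.nat_pow_closed[OF g])
    then show "gg [^]\<^bsub>KR a b\<^esub> i \<noteq> (0,0)" by (simp add: nat_pow_mult_of KR_def)
  qed
qed


lemma kmul_sc: "kmul a b (c,0) z = (c * fst z, c * snd z)"
  by (simp add: kmul_def)

lemma kmul_sc2: "kmul a b z (c,0) = (c * fst z, c * snd z)"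
  by (simp add: kmul_def mult.commute)

lemma struct_exists:
  fixes q :: nat
  assumes qd: "card (UNIV::'a::{finite,field} set) = q"
  shows "\<exists>a b (g::nat \<Rightarrow> 'a\<times>'a) c0. c0 \<noteq> 0 \<and> (\<forall>i j. g (i+j) = kmul a b (g i) (g j))
     \<and> (\<forall>j. snd (g j) = 0 \<longleftrightarrow> (q+1) dvd j)
     \<and> (\<forall>j. g (j + (q+1)) = (c0 * fst (g j), c0 * snd (g j)))
     \<and> (\<forall>i j c. i < j \<longrightarrow> j < q+1 \<longrightarrow> g j \<noteq> (c * fst (g i), c * snd (g i)))
     \<and> (\<forall>j. g j \<noteq> (0,0))"
proof -
  obtain a b :: 'a where irr: "\<forall>u. u*u \<noteq> a*u + b" using irr_exists by blast
  interpret F: field "KR a b" by (rule KR_field[OF irr])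
  obtain gg where gen: "\<forall>z. z \<noteq> (0,0) \<longrightarrow> (\<exists>i::nat. z = gg [^]\<^bsub>KR a b\<^esub> i)"
    and ord: "\<forall>i::nat. gg [^]\<^bsub>KR a b\<^esub> i = (1,0) \<longleftrightarrow> (card (UNIV::'a set) * card (UNIV::'a set) - 1) dvd i"
    and nz: "\<forall>i::nat. gg [^]\<^bsub>KR a b\<^esub> i \<noteq> (0,0)"
    using gen_exists[OF irr] by blast
  define g where "g i = gg [^]\<^bsub>KR a b\<^esub> (i::nat)" for i
  have car: "\<And>z. z \<in> carrier (KR a b)" by (simp add: KR_def)
  have mul: "g (i+j) = kmul a b (g i) (g j)" for i j
    using F.nat_pow_mult[OF car[of gg], of i j] by (simp add: g_def KR_def)
  have g0: "g 0 = (1,0)" by (simp add: g_def KR_def)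
  have gpow: "g (i*n) = g i [^]\<^bsub>KR a b\<^esub> n" for i n
    using F.nat_pow_pow[OF car[of gg], of i n] by (simp add: g_def)
  have scpow: "(c,0) [^]\<^bsub>KR a b\<^esub> n = (c^n, 0::'a)" for c :: 'a and n
    by (induct n) (simp_all add: KR_def kmul_def)
  have gnz: "g j \<noteq> (0,0)" for j using nz by (simp add: g_def)
  define N where "N = q * q - 1"
  have q2: "2 \<le> q"
  proof -
    have "card {0::'a, 1} \<le> card (UNIV :: 'a set)" by (rule card_mono) auto
    then show ?thesis using qd by simp
  qed
  have N: "N = (q+1) * (q-1)" using q2 by (simp add: N_def algebra_simps)
  have g1: "g i = (1,0) \<longleftrightarrow> N dvd i" for i using ord qd by (simp add: g_def N_def)
  have per: "g (x + N*d) = g x" for x d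
  proof -
    have "g (N*d) = (1,0)" using g1 by simp
    then show ?thesis using mul[of x "N*d"] by (simp add: kmul_sc2)
  qed
  have S1: "(q+1) dvd j" if sj: "snd (g j) = 0" for j
  proof -
    obtain x where gj: "g j = (x, 0)" using sj by (metis prod.collapse)
    have "x \<noteq> 0" using gj gnz by auto
    have "g (j * (q-1)) = (x^(q-1), 0)" using gpow[of j "q-1"] gj scpow by simp
    also have "x^(q-1) = 1" using fermat_fin[OF \<open>x \<noteq> 0\<close>] qd by simp
    finally have "N dvd j * (q-1)" using g1 by simp
    then have "(q+1) * (q-1) dvd j * (q-1)" using N by simp
    then have "(q-1) * (q+1) dvd (q-1) * j" by (simp only: mult.commute)
    then show ?thesis using q2 nat_mult_dvd_cancel_disj[of "q-1" "q+1" j] by simp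
  qed
  have perk: "g ((q+1)*k) = g ((q+1)*(k mod (q-1)))" for k
  proof -
    have "(q+1)*k = (q+1)*(k mod (q-1) + (q-1)*(k div (q-1)))" by simp
    also have "... = (q+1)*(k mod (q-1)) + N*(k div (q-1))" unfolding N by (simp only: distrib_left mult.assoc)
    finally have e: "(q+1)*k = (q+1)*(k mod (q-1)) + N*(k div (q-1))" .
    show ?thesis by (subst e) (rule per)
  qed
  define Sc where "Sc = (\<lambda>c::'a. (c, 0::'a)) ` (UNIV - {0})"
  define P where "P = (\<lambda>k. g ((q+1)*k)) ` {..<q-1}"
  have cSc: "card Sc = q - 1"
    unfolding Sc_def using qd by (subst card_image) (auto simp: inj_on_def card_Diff_singleton)
  have cP: "card P \<le> q - 1" unfolding P_def using card_image_le[of "{..<q-1}"] by simp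
  have "Sc \<subseteq> P"
  proof
    fix z assume "z \<in> Sc"
    then obtain c where z: "z = (c,0)" "c \<noteq> 0" unfolding Sc_def by blast
    then obtain j where j: "z = g j" using gen by (auto simp: g_def)
    then have "(q+1) dvd j" using S1[of j] z by (metis snd_conv)
    then obtain k where "j = (q+1)*k" by blast
    then have "z = g ((q+1)*(k mod (q-1)))" using j perk by simp
    moreover have "k mod (q-1) < q-1" using q2 by simp
    ultimately show "z \<in> P" unfolding P_def by blast
  qed
  then have "Sc = P" using cSc cP by (intro card_seteq) (auto simp: P_def)
  moreover have "g (q+1) \<in> P"
  proof -
    have "1 mod (q-1) < q-1" by (rule mod_less_divisor) (use q2 in simp)
    moreover have "g (q+1) = g ((q+1)*(1 mod (q-1)))" using perk[of 1] by simp
    ultimately show ?thesis unfolding P_def by blast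
  qed
  ultimately obtain c0 where c0: "g (q+1) = (c0, 0)" "c0 \<noteq> 0" unfolding Sc_def by blast
  have S2: "snd (g j) = 0" if dj: "(q+1) dvd j" for j
  proof -
    obtain k where "j = (q+1)*k" using dj by blast
    then show ?thesis using gpow[of "q+1" k] c0 scpow by simp
  qed
  have E2: "g (j + (q+1)) = (c0 * fst (g j), c0 * snd (g j))" for j
    using mul[of j "q+1"] c0 by (simp add: kmul_sc2 mult.commute)
  have C4: "g j \<noteq> (c * fst (g i), c * snd (g i))" if "i < j" "j < q+1" for i j c
  proof
    assume eq: "g j = (c * fst (g i), c * snd (g i))"
    have "g j = kmul a b (g (j-i)) (g i)" using mul[of "j-i" i] that by simp
    then have "kmul a b (g (j-i)) (g i) = kmul a b (c,0) (g i)" using eq by (simp add: kmul_sc)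
    then have "g (j-i) \<otimes>\<^bsub>KR a b\<^esub> g i = (c,0) \<otimes>\<^bsub>KR a b\<^esub> g i" by (simp add: KR_def)
    then have "g (j-i) = (c,0)"
      using F.m_rcancel[of "g i" "g (j-i)" "(c,0)"] gnz car by (simp add: KR_def)
    then have "(q+1) dvd (j-i)" using S1 by simp
    then show False using dvd_imp_le[of "q+1" "j-i"] that by simp
  qed
  show ?thesis
    apply (rule exI[of _ a], rule exI[of _ b], rule exI[of _ g], rule exI[of _ c0])
    apply (intro conjI allI impI iffI)
    apply (fact c0(2)) apply (rule mul) apply (erule S1) apply (erule S2) apply (rule E2)
    apply (erule (1) C4) apply (rule gnz) done
qed


definition hom :: "nat \<Rightarrow> 'a::field poly \<Rightarrow> 'a \<times> 'a \<Rightarrow> 'a" where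
  "hom D p z = (\<Sum>i\<le>D. coeff p i * fst z ^ i * snd z ^ (D - i))"

lemma poly_sum_le:
  fixes p :: "'a::field poly"
  assumes "degree p \<le> D"
  shows "poly p w = (\<Sum>i\<le>D. coeff p i * w ^ i)"
proof -
  have "poly p w = (\<Sum>i\<le>degree p. coeff p i * w ^ i)" by (rule poly_altdef)
  also have "... = (\<Sum>i\<le>D. coeff p i * w ^ i)"
    using assms by (intro sum.mono_neutral_left) (auto simp: coeff_eq_0)
  finally show ?thesis .
qed

lemma hom_aff:
  assumes "degree p \<le> D" "snd z \<noteq> 0"
  shows "hom D p z = snd z ^ D * poly p (fst z / snd z)"
proof -
  have "snd z ^ D * poly p (fst z / snd z) = (\<Sum>i\<le>D. snd z ^ D * (coeff p i * (fst z / snd z) ^ i))"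
    by (simp add: poly_sum_le[OF assms(1)] sum_distrib_left)
  also have "... = (\<Sum>i\<le>D. coeff p i * fst z ^ i * snd z ^ (D - i))"
  proof (rule sum.cong[OF refl])
    fix i assume "i \<in> {..D}"
    then have "snd z ^ D = snd z ^ i * snd z ^ (D - i)" by (simp flip: power_add)
    then show "snd z ^ D * (coeff p i * (fst z / snd z) ^ i) = coeff p i * fst z ^ i * snd z ^ (D - i)"
      using assms(2) by (simp add: power_divide field_simps)
  qed
  finally show ?thesis by (simp add: hom_def)
qed

lemma hom_inf:
  assumes "snd z = 0"
  shows "hom D p z = coeff p D * fst z ^ D"
proof -
  have "hom D p z = (\<Sum>i\<le>D. if i = D then coeff p D * fst z ^ D else 0)"
    unfolding hom_def using assms by (intro sum.cong) auto
  then show ?thesis by simp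
qed

lemma hom_add: "hom D (p + p') z = hom D p z + hom D p' z"
  by (simp add: hom_def algebra_simps sum.distrib)

lemma hom_smult: "hom D (smult c p) z = c * hom D p z"
  by (simp add: hom_def sum_distrib_left algebra_simps)

lemma hom_0: "hom D 0 z = 0" by (simp add: hom_def)

lemma hom_sum: "hom D (\<Sum>k\<in>A. f k) z = (\<Sum>k\<in>A. hom D (f k) z)"
  by (induct A rule: infinite_finite_induct) (simp_all add: hom_0 hom_add)

lemma coeff_mult_top:
  assumes "degree p \<le> D1" "degree p' \<le> D2"
  shows "coeff (p * p') (D1 + D2) = coeff p D1 * coeff p' D2"
proof -
  have "coeff (p * p') (D1 + D2) = (\<Sum>i\<le>D1+D2. coeff p i * coeff p' (D1 + D2 - i))"
    by (rule coeff_mult)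
  also have "... = (\<Sum>i\<le>D1+D2. if i = D1 then coeff p D1 * coeff p' D2 else 0)"
  proof (rule sum.cong[OF refl])
    fix i assume "i \<in> {..D1+D2}"
    show "coeff p i * coeff p' (D1 + D2 - i) = (if i = D1 then coeff p D1 * coeff p' D2 else 0)"
    proof (cases "i < D1")
      case True
      then have "coeff p' (D1 + D2 - i) = 0" using assms(2) by (intro coeff_eq_0) auto
      then show ?thesis using True by simp
    next
      case False
      then show ?thesis
        using assms(1) by (cases "i = D1") (auto simp: coeff_eq_0)
    qed
  qed
  also have "... = coeff p D1 * coeff p' D2" by simp
  finally show ?thesis .
qed

lemma hom_mult:
  assumes "degree p \<le> D1" "degree p' \<le> D2"
  shows "hom (D1 + D2) (p * p') z = hom D1 p z * hom D2 p' z"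
proof (cases "snd z = 0")
  case True
  then show ?thesis using coeff_mult_top[OF assms] by (simp add: hom_inf power_add)
next
  case False
  have "degree (p * p') \<le> D1 + D2"
    using assms degree_mult_le[of p p'] by simp
  then show ?thesis using False assms by (simp add: hom_aff power_add)
qed

lemma hom_scale: "hom D p (c * x, c * y) = c ^ D * hom D p (x, y)"
proof -
  have "hom D p (c * x, c * y) = (\<Sum>i\<le>D. c ^ D * (coeff p i * x ^ i * y ^ (D - i)))"
    unfolding hom_def
  proof (intro sum.cong refl)
    fix i assume "i \<in> {..D}"
    then have "c ^ D = c ^ i * c ^ (D - i)" by (simp flip: power_add)
    then show "coeff p i * fst (c * x, c * y) ^ i * snd (c * x, c * y) ^ (D - i) = c ^ D * (coeff p i * x ^ i * y ^ (D - i))"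
      by (simp add: power_mult_distrib)
  qed
  then show ?thesis by (simp add: hom_def sum_distrib_left)
qed

lemma hom_zeros:
  fixes p :: "'a::{finite,field} poly"
  assumes p: "p \<noteq> 0" and dg: "degree p \<le> D"
    and nz: "\<forall>z\<in>Z. z \<noteq> (0,0)"
    and np: "\<forall>z\<in>Z. \<forall>w\<in>Z. \<forall>c. w = (c * fst z, c * snd z) \<longrightarrow> w = z"
    and zr: "\<forall>z\<in>Z. hom D p z = 0"
  shows "card Z \<le> D"
proof -
  define Z1 where "Z1 = {z\<in>Z. snd z = 0}"
  define Z2 where "Z2 = {z\<in>Z. snd z \<noteq> 0}"
  have cZ: "card Z = card Z1 + card Z2"
    unfolding Z1_def Z2_def by (subst card_Un_disjoint[symmetric]) (auto intro: arg_cong[where f=card])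
  have "inj_on (\<lambda>z. fst z / snd z) Z2"
  proof (rule inj_onI)
    fix z w assume z: "z \<in> Z2" and w: "w \<in> Z2" and e: "fst z / snd z = fst w / snd w"
    have "w = (snd w / snd z * fst z, snd w / snd z * snd z)"
      using z w e by (auto simp: Z2_def field_simps prod_eq_iff)
    then show "z = w" using np z w unfolding Z2_def by (metis (no_types, lifting) mem_Collect_eq)
  qed
  moreover have "(\<lambda>z. fst z / snd z) ` Z2 \<subseteq> {x. poly p x = 0}"
  proof
    fix x assume "x \<in> (\<lambda>z. fst z / snd z) ` Z2"
    then obtain z where z: "z \<in> Z2" "x = fst z / snd z" by blast
    have "hom D p z = 0" using zr z unfolding Z2_def by auto
    then show "x \<in> {x. poly p x = 0}" using hom_aff[OF dg] z unfolding Z2_def by auto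
  qed
  ultimately have c2: "card Z2 \<le> degree p"
    using card_poly_roots_bound[OF p] card_mono[of "{x. poly p x = 0}"] card_image
    by (metis (no_types, lifting) finite order_trans)
  have c1: "card Z1 \<le> 1"
  proof -
    have "\<forall>z\<in>Z1. \<forall>w\<in>Z1. z = w"
    proof (intro ballI)
      fix z w assume z: "z \<in> Z1" and w: "w \<in> Z1"
      have "fst z \<noteq> 0" using z nz unfolding Z1_def by (auto simp: prod_eq_iff)
      then have "z = (fst z / fst w * fst w, fst z / fst w * snd w) \<or> fst w = 0"
        using z w unfolding Z1_def by (auto simp: prod_eq_iff)
      moreover have "fst w \<noteq> 0" using w nz unfolding Z1_def by (auto simp: prod_eq_iff)
      ultimately show "z = w" using np z w unfolding Z1_def by (metis (no_types, lifting) mem_Collect_eq)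
    qed
    then show ?thesis by (simp add: card_le_Suc0_iff_eq)
  qed
  show ?thesis
  proof (cases "Z1 = {}")
    case True
    then show ?thesis using cZ c2 dg by simp
  next
    case False
    then obtain z where z: "z \<in> Z1" by blast
    have "fst z \<noteq> 0" using z nz unfolding Z1_def by (auto simp: prod_eq_iff)
    moreover have "hom D p z = 0" using zr z unfolding Z1_def by auto
    ultimately have "coeff p D = 0" using hom_inf[of z D p] z unfolding Z1_def by simp
    then have "degree p \<noteq> D" using p by (metis leading_coeff_0_iff)
    then show ?thesis using cZ c1 c2 dg by simp
  qed
qed


definition lin :: "'a::field \<Rightarrow> 'a \<times> 'a \<Rightarrow> 'a poly" where
  "lin a w = [: fst w + a * snd w, snd w :]"

lemma hom_lin: "hom 1 (lin a w) z = snd (kmul a b w z)"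
  by (simp add: hom_def lin_def kmul_def algebra_simps)

lemma deg_lin: "degree (lin a w) \<le> 1"
  by (simp add: lin_def)

lemma hom_prod_lin:
  "hom n (\<Prod>k<n. lin a (w k)) z = (\<Prod>k<n. snd (kmul a b (w k) z)) \<and> degree (\<Prod>k<n. lin a (w k)) \<le> n"
proof (induct n)
  case 0
  then show ?case by (simp add: hom_def)
next
  case (Suc n)
  have d: "degree ((\<Prod>k<n. lin a (w k)) * lin a (w n)) \<le> n + 1"
  proof -
    have "degree (lin a (w n)) \<le> 1" by (rule deg_lin)
    then show ?thesis
      using Suc degree_mult_le[of "\<Prod>k<n. lin a (w k)" "lin a (w n)"] by simp
  qed
  have "hom (n + 1) ((\<Prod>k<n. lin a (w k)) * lin a (w n)) z
      = hom n (\<Prod>k<n. lin a (w k)) z * hom 1 (lin a (w n)) z"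
    using Suc deg_lin[of a "w n"] by (intro hom_mult) auto
  then show ?case using Suc d by (simp add: hom_lin hom_lin[unfolded One_nat_def])
qed

lemma hom_pow:
  assumes "degree p \<le> d"
  shows "hom (d*l) (p^l) z = (hom d p z)^l \<and> degree (p^l) \<le> d*l"
proof (induct l)
  case 0
  then show ?case by (simp add: hom_def)
next
  case (Suc l)
  have "hom (d + d*l) (p * p^l) z = hom d p z * hom (d*l) (p^l) z"
    using Suc assms by (intro hom_mult) auto
  moreover have "degree (p * p^l) \<le> d + d*l"
    using Suc assms degree_mult_le[of p "p^l"] by simp
  ultimately show ?case using Suc by simp
qed

lemma hom_monom:
  assumes "i \<le> d"
  shows "hom d (monom 1 i) z = fst z ^ i * snd z ^ (d - i)"
proof -
  have "hom d (monom 1 i) z = (\<Sum>k\<le>d. if k = i then fst z ^ i * snd z ^ (d - i) else 0)"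
    unfolding hom_def by (intro sum.cong) (auto simp: coeff_monom)
  then show ?thesis using assms by simp
qed

locale cons =
  fixes a b c0 :: "'a::{finite,field}" and g :: "nat \<Rightarrow> 'a \<times> 'a" and q r s t :: nat
  assumes c0: "c0 \<noteq> 0"
    and gmul: "\<And>i j. g (i+j) = kmul a b (g i) (g j)"
    and gsnd: "\<And>j. snd (g j) = 0 \<longleftrightarrow> (q+1) dvd j"
    and gper: "\<And>j. g (j + (q+1)) = (c0 * fst (g j), c0 * snd (g j))"
    and gnp0: "\<And>i j c. i < j \<Longrightarrow> j < q+1 \<Longrightarrow> g j \<noteq> (c * fst (g i), c * snd (g i))"
    and gnz: "\<And>j. g j \<noteq> (0,0)"
    and r1: "1 \<le> r" and dv: "(r+1) dvd (q+1)" and s2: "2 \<le> s"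
    and sle: "s \<le> (q+1) div (r+1)" and t1: "1 \<le> t" and ts: "t \<le> s"
begin

abbreviation "m \<equiv> r + 1"

definition e where "e = (q+1) div (r+1)"

lemma qe: "q + 1 = e * m"
proof -
  have "(r+1) * ((q+1) div (r+1)) = q+1" by (rule dvd_mult_div_cancel[OF dv])
  then show ?thesis unfolding e_def by (simp only: mult.commute)
qed
lemma es: "s \<le> e" using sle by (simp add: e_def)
lemma e2: "2 \<le> e" using es s2 by simp
lemma edvd: "(q+1) dvd x \<Longrightarrow> e dvd x"
  using qe by (metis dvd_mult_left)

lemma np: assumes "i < q+1" "j < q+1" "g j = (c * fst (g i), c * snd (g i))" shows "i = j"
proof (rule ccontr)
  assume "i \<noteq> j"
  show False
  proof (cases "i < j")
    case True then show False using gnp0 assms by blast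
  next
    case False
    then have ji: "j < i" using \<open>i \<noteq> j\<close> by simp
    have "c \<noteq> 0" using assms(3) gnz[of j] by auto
    then have "g i = (inverse c * fst (g j), inverse c * snd (g j))"
      using assms(3) by (simp add: prod_eq_iff)
    then show False using gnp0[OF ji assms(1)] by blast
  qed
qed

lemma inj_g: "inj_on g {..<q+1}"
proof (rule inj_onI)
  fix i j assume "i \<in> {..<q+1}" "j \<in> {..<q+1}" "g i = g j"
  then show "i = j" using np[of i j 1] by simp
qed

lemma npset:
  assumes "J \<subseteq> {..<q+1}"
  shows "\<forall>z\<in>g ` J. \<forall>w\<in>g ` J. \<forall>c. w = (c * fst z, c * snd z) \<longrightarrow> w = z"
proof (intro ballI allI impI)
  fix z w c assume z: "z \<in> g ` J" and w: "w \<in> g ` J" and e: "w = (c * fst z, c * snd z)"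
  obtain i where i: "i \<in> J" "z = g i" using z by blast
  obtain j where j: "j \<in> J" "w = g j" using w by blast
  have "i = j" using np[of i j c] i j e assms by auto
  then show "w = z" using i j by simp
qed

definition g1 where "g1 = (\<Prod>k<m. lin a (g (e*k)))"
definition g2 where "g2 = (\<Prod>k<m. lin a (g (e*k+1)))"
definition G1v where "G1v j = (\<Prod>k<m. snd (g (e*k + j)))"
definition G2v where "G2v j = (\<Prod>k<m. snd (g (e*k + 1 + j)))"

lemma deg_g1: "degree g1 \<le> m"
  unfolding g1_def by (rule conjunct2[OF hom_prod_lin[of m a "\<lambda>k. g (e*k)" "g 0" b]])

lemma deg_g2: "degree g2 \<le> m"
  unfolding g2_def by (rule conjunct2[OF hom_prod_lin[of m a "\<lambda>k. g (e*k+1)" "g 0" b]])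

lemma hom_g1: "hom m g1 (g j) = G1v j"
proof -
  have "hom m g1 (g j) = (\<Prod>k<m. snd (kmul a b (g (e*k)) (g j)))"
    unfolding g1_def by (rule conjunct1[OF hom_prod_lin[of m a "\<lambda>k. g (e*k)" "g j" b]])
  also have "... = G1v j" unfolding G1v_def by (intro prod.cong refl) (simp only: gmul[symmetric])
  finally show ?thesis .
qed

lemma hom_g2: "hom m g2 (g j) = G2v j"
proof -
  have "hom m g2 (g j) = (\<Prod>k<m. snd (kmul a b (g (e*k+1)) (g j)))"
    unfolding g2_def by (rule conjunct1[OF hom_prod_lin[of m a "\<lambda>k. g (e*k+1)" "g j" b]])
  also have "... = G2v j" unfolding G2v_def by (intro prod.cong refl) (simp only: gmul[symmetric])
  finally show ?thesis .
qed

lemma snd_shift: "snd (g (e*m + j)) = c0 * snd (g j)"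
proof -
  have "e*m + j = j + (q+1)" using qe by simp
  then show ?thesis by (simp only: gper) simp
qed

lemma G1_shift: "G1v (j + e) = c0 * G1v j"
proof -
  define f where "f k = snd (g (e*k + j))" for k
  have h0: "G1v (j + e) = (\<Prod>k<Suc r. f (Suc k))"
    unfolding G1v_def f_def by (intro prod.cong) (auto simp: algebra_simps)
  have h1: "(\<Prod>k<Suc r. f (Suc k)) = (\<Prod>k<r. f (Suc k)) * f (Suc r)" by simp
  have h2: "f (Suc r) = c0 * f 0" using snd_shift by (simp add: f_def)
  have h3: "G1v j = f 0 * (\<Prod>k<r. f (Suc k))"
    unfolding G1v_def f_def using prod.lessThan_Suc_shift[of "\<lambda>k. snd (g (e*k + j))" r] by simp
  show ?thesis by (simp only: h0 h1 h2 h3 ac_simps)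
qed

lemma G2_shift: "G2v (j + e) = c0 * G2v j"
proof -
  define f where "f k = snd (g (e*k + 1 + j))" for k
  have h0: "G2v (j + e) = (\<Prod>k<Suc r. f (Suc k))"
    unfolding G2v_def f_def by (intro prod.cong) (auto simp: algebra_simps)
  have h1: "(\<Prod>k<Suc r. f (Suc k)) = (\<Prod>k<r. f (Suc k)) * f (Suc r)" by simp
  have e1: "e * Suc r + 1 + j = e*m + (1+j)" by simp
  have e2: "f 0 = snd (g (1+j))" by (simp add: f_def)
  have h2: "f (Suc r) = c0 * f 0" unfolding e2 by (simp only: f_def e1 snd_shift)
  have h3: "G2v j = f 0 * (\<Prod>k<r. f (Suc k))"
    unfolding G2v_def f_def using prod.lessThan_Suc_shift[of "\<lambda>k. snd (g (e*k + 1 + j))" r] by simp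
  show ?thesis by (simp only: h0 h1 h2 h3 ac_simps)
qed

lemma G_shiftk: "G1v (j + e*k) = c0^k * G1v j \<and> G2v (j + e*k) = c0^k * G2v j"
proof (induct k)
  case 0 then show ?case by simp
next
  case (Suc k)
  have eq: "j + e * Suc k = (j + e*k) + e" by simp
  have a1: "G1v (j + e * Suc k) = c0 * G1v (j + e*k)" by (simp only: eq G1_shift)
  have a2: "G2v (j + e * Suc k) = c0 * G2v (j + e*k)" by (simp only: eq G2_shift)
  show ?case unfolding a1 a2 using Suc by (simp only: power_Suc mult.assoc)
qed


definition D where "D = (r - 1) + m * (t - 1)"
definition mono where "mono i l = monom 1 i * (g1 ^ l * g2 ^ (t - 1 - l))"
definition Iset where "Iset = {..<r} \<times> {..<t}"
definition pt where "pt j = g (j div m + e * (j mod m))"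
definition FP where "FP A = (\<Sum>p\<in>Iset. smult (A p) (mono (fst p) (snd p)))"
definition basis where "basis i l = (\<lambda>j. if j < s*m then hom D (mono i l) (pt j) else 0)"
definition cw where "cw A = (\<lambda>j. \<Sum>p\<in>Iset. A p * basis (fst p) (snd p) j)"

lemma mono_facts:
  assumes "i < r" "l < t"
  shows "degree (mono i l) \<le> D \<and>
    hom D (mono i l) z = fst z ^ i * snd z ^ (r - 1 - i) * (hom m g1 z) ^ l * (hom m g2 z) ^ (t - 1 - l)"
proof -
  have p1: "hom (m*l) (g1^l) z = (hom m g1 z)^l \<and> degree (g1^l) \<le> m*l"
    by (rule hom_pow[OF deg_g1])
  have p2: "hom (m*(t-1-l)) (g2^(t-1-l)) z = (hom m g2 z)^(t-1-l) \<and> degree (g2^(t-1-l)) \<le> m*(t-1-l)"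
    by (rule hom_pow[OF deg_g2])
  have d12: "degree (g1 ^ l * g2 ^ (t - 1 - l)) \<le> m*l + m*(t-1-l)"
    using p1 p2 degree_mult_le[of "g1^l" "g2^(t-1-l)"] by linarith
  have h12: "hom (m*l + m*(t-1-l)) (g1 ^ l * g2 ^ (t - 1 - l)) z = (hom m g1 z)^l * (hom m g2 z)^(t-1-l)"
    using hom_mult[of "g1^l" "m*l" "g2^(t-1-l)" "m*(t-1-l)" z] p1 p2 by simp
  have ll: "l + (t-1-l) = t-1" using assms by simp
  have "m*l + m*(t-1-l) = m*(t-1)" by (metis ll add_mult_distrib2)
  then have eD: "D = (r-1) + (m*l + m*(t-1-l))" unfolding D_def by simp
  have dm: "degree (monom (1::'a) i) \<le> r - 1" using assms by (simp add: degree_monom_eq)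
  have "degree (mono i l) \<le> (r-1) + (m*l + m*(t-1-l))"
    unfolding mono_def using degree_mult_le[of "monom (1::'a) i" "g1 ^ l * g2 ^ (t - 1 - l)"] dm d12 by linarith
  moreover have "hom ((r-1) + (m*l + m*(t-1-l))) (mono i l) z
      = hom (r-1) (monom 1 i) z * hom (m*l + m*(t-1-l)) (g1 ^ l * g2 ^ (t - 1 - l)) z"
    unfolding mono_def by (rule hom_mult[OF dm d12])
  moreover have "hom (r-1) (monom 1 i) z = fst z ^ i * snd z ^ (r - 1 - i)"
    using assms by (intro hom_monom) simp
  ultimately show ?thesis unfolding eD[symmetric] using h12 by simp
qed

lemma deg_FP: "degree (FP A) \<le> D"
  unfolding FP_def
proof (rule degree_sum_le)
  fix p assume "p \<in> Iset"
  then have "degree (mono (fst p) (snd p)) \<le> D" using mono_facts by (auto simp: Iset_def)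
  then show "degree (smult (A p) (mono (fst p) (snd p))) \<le> D"
    using degree_smult_le order_trans by blast
qed (simp add: Iset_def)

lemma hom_FP: "hom D (FP A) z = (\<Sum>p\<in>Iset. A p * (fst z ^ fst p * snd z ^ (r - 1 - fst p)
      * (hom m g1 z) ^ snd p * (hom m g2 z) ^ (t - 1 - snd p)))"
  unfolding FP_def hom_sum hom_smult
  by (intro sum.cong refl) (auto simp: Iset_def mono_facts)

lemma cw_eval: "cw A j = (if j < s*m then hom D (FP A) (pt j) else 0)"
  unfolding cw_def basis_def FP_def hom_sum hom_smult by simp

lemma cw_beyond: "s*m \<le> j \<Longrightarrow> cw A j = 0"
  by (simp add: cw_eval)

lemma idx_lt: assumes "j < s*m" shows "j div m + e * (j mod m) < q+1"
proof -
  have "j div m < s" using assms by (simp add: div_less_iff_less_mult)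
  then have "j div m < e" using es by simp
  moreover have "j mod m \<le> r" using less_Suc_eq_le by fastforce
  ultimately have "j div m + e * (j mod m) < e + e * r"
    using mult_le_mono2 by (metis add_less_le_mono)
  then show ?thesis using qe by simp
qed

lemma idx_inj: assumes "j < s*m" "j' < s*m" "j div m + e * (j mod m) = j' div m + e * (j' mod m)"
  shows "j = j'"
proof -
  have "j div m < s" "j' div m < s" using assms by (simp_all add: div_less_iff_less_mult)
  then have b1: "j div m < e" "j' div m < e" using es by simp_all
  have x: "(j div m + e * (j mod m)) mod e = j div m" using b1 by simp
  have y: "(j' div m + e * (j' mod m)) mod e = j' div m" using b1 by simp
  have d: "j div m = j' div m" using x y assms(3) by metis
  then have "j mod m = j' mod m" using assms(3) e2 by simp
  then show ?thesis using d by (metis div_mult_mod_eq)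
qed

lemma pt_inj: "inj_on pt {..<s*m}"
proof (rule inj_onI)
  fix j j' assume j: "j \<in> {..<s*m}" and j': "j' \<in> {..<s*m}" and e: "pt j = pt j'"
  have g: "g (j div m + e * (j mod m)) = g (j' div m + e * (j' mod m))" using e unfolding pt_def .
  have "j div m + e * (j mod m) = j' div m + e * (j' mod m)"
    by (rule inj_onD[OF inj_g g]) (use idx_lt j j' in auto)
  then show "j = j'" using idx_inj j j' by auto
qed

lemma pt_block: assumes "u < s" "k < m" shows "u*m + k < s*m" "pt (u*m+k) = g (u + e*k)"
proof -
  have "u*m + k < u*m + m" using assms by simp
  also have "... = (u+1)*m" by simp
  also have "... \<le> s*m" using assms by (intro mult_le_mono1) simp
  finally show "u*m + k < s*m" .
  have d1: "(k + u*m) div m = u + k div m" by (rule div_mult_self1) simp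
  have d2: "k div m = 0" using assms(2) by (rule div_less)
  have m1: "(k + u*m) mod m = k mod m" by (rule mod_mult_self1)
  have m2: "k mod m = k" using assms(2) by (rule mod_less)
  show "pt (u*m+k) = g (u + e*k)" unfolding pt_def
    by (simp only: add.commute[of "u*m" k] d1 d2 m1 m2 add_0_right)
qed


definition beta where "beta A u i = (\<Sum>l<t. A (i,l) * G1v u ^ l * G2v u ^ (t-1-l))"
definition Pb where "Pb A u = (\<Sum>i<r. smult (beta A u i) (monom 1 i))"

lemma hom_Pb: "hom (r-1) (Pb A u) z = (\<Sum>i<r. beta A u i * (fst z ^ i * snd z ^ (r-1-i)))"
  unfolding Pb_def hom_sum hom_smult by (intro sum.cong refl) (simp add: hom_monom)

lemma deg_Pb: "degree (Pb A u) \<le> r - 1"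
  unfolding Pb_def
proof (rule degree_sum_le)
  fix i assume "i \<in> {..<r}"
  then have "degree (monom (1::'a) i) \<le> r - 1" by (simp add: degree_monom_eq)
  then show "degree (smult (beta A u i) (monom 1 i)) \<le> r - 1"
    using degree_smult_le order_trans by blast
qed simp

lemma coeff_Pb: assumes "i < r" shows "coeff (Pb A u) i = beta A u i"
proof -
  have "coeff (Pb A u) i = (\<Sum>ia<r. if ia = i then beta A u ia else 0)"
    unfolding Pb_def coeff_sum by (intro sum.cong) (auto simp: coeff_monom)
  then show ?thesis using assms by simp
qed

lemma blk_lt: assumes "u < e" "k < m" shows "u + e*k < q+1"
proof -
  have "u + e*k < e + e*k" using assms by simp
  also have "... = e * (k+1)" by simp
  also have "... \<le> e * m" using assms by (intro mult_le_mono2) simp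
  finally show ?thesis using qe by simp
qed

lemma blk_eq: assumes "u < e" "u' < e" "u + e*k = u' + e*k'" shows "u = u'" "k = k'"
proof -
  have x: "(u + e*k) mod e = u" using assms(1) by simp
  have y: "(u' + e*k') mod e = u'" using assms(2) by simp
  have "u = (u + e*k) mod e" using x by simp
  also have "... = (u' + e*k') mod e" using assms(3) by simp
  also have "... = u'" using y by simp
  finally show uu: "u = u'" .
  show "k = k'" using assms(3) e2 uu by simp
qed

lemma blk_card: assumes "u < e" "finite K" shows "card ((\<lambda>k. u + e*k) ` K) = card K"
  using assms e2 by (intro card_image inj_onI) simp

lemma block_eval:
  assumes u: "u < s" and k: "k < m"
  shows "cw A (u*m+k) = c0^(k*(t-1)) * hom (r-1) (Pb A u) (g (u + e*k))"
proof -
  define z where "z = g (u + e*k)"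
  define c where "c = c0 ^ k"
  define X where "X i = fst z ^ i * snd z ^ (r - 1 - i)" for i
  have G: "hom m g1 z = c * G1v u" "hom m g2 z = c * G2v u"
    unfolding z_def c_def hom_g1 hom_g2 using G_shiftk by auto
  have "cw A (u*m+k) = hom D (FP A) z" using pt_block[OF u k] by (simp add: cw_eval z_def)
  also have "... = (\<Sum>p\<in>Iset. A p * (X (fst p) * (c * G1v u) ^ snd p * (c * G2v u) ^ (t - 1 - snd p)))"
    unfolding hom_FP G X_def by simp
  also have "... = (\<Sum>p\<in>Iset. c^(t-1) * (A p * G1v u ^ snd p * G2v u ^ (t - 1 - snd p) * X (fst p)))"
  proof (intro sum.cong refl)
    fix p assume "p \<in> Iset"
    then have "snd p + (t - 1 - snd p) = t - 1" by (auto simp: Iset_def)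
    then have "c ^ snd p * c ^ (t - 1 - snd p) = c^(t-1)" by (metis power_add)
    then show "A p * (X (fst p) * (c * G1v u) ^ snd p * (c * G2v u) ^ (t - 1 - snd p))
        = c^(t-1) * (A p * G1v u ^ snd p * G2v u ^ (t - 1 - snd p) * X (fst p))"
      by (simp add: power_mult_distrib algebra_simps)
  qed
  also have "... = c^(t-1) * (\<Sum>p\<in>Iset. A p * G1v u ^ snd p * G2v u ^ (t - 1 - snd p) * X (fst p))"
    by (simp add: sum_distrib_left)
  also have "(\<Sum>p\<in>Iset. A p * G1v u ^ snd p * G2v u ^ (t - 1 - snd p) * X (fst p))
      = (\<Sum>i<r. \<Sum>l<t. A (i,l) * G1v u ^ l * G2v u ^ (t - 1 - l) * X i)"
    unfolding Iset_def sum.cartesian_product by (rule sum.cong) (auto simp: case_prod_beta)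
  also have "... = (\<Sum>i<r. beta A u i * X i)"
    unfolding beta_def by (simp add: sum_distrib_right)
  also have "... = hom (r-1) (Pb A u) z" unfolding hom_Pb X_def ..
  finally show ?thesis by (simp add: c_def z_def power_mult)
qed

lemma block_zero:
  assumes u: "u < s" and k0: "k0 < m" and z: "\<forall>k<m. k \<noteq> k0 \<longrightarrow> cw A (u*m+k) = 0"
  shows "Pb A u = 0"
proof (rule ccontr)
  assume P: "Pb A u \<noteq> 0"
  have ue: "u < e" using u es by simp
  define J where "J = (\<lambda>k. u + e*k) ` ({..<m} - {k0})"
  have Jq: "J \<subseteq> {..<q+1}" unfolding J_def using blk_lt[OF ue] by auto
  have cJ: "card J = r" unfolding J_def using k0 by (simp add: blk_card[OF ue] card_Diff_singleton)
  have "card (g ` J) \<le> r - 1"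
  proof (rule hom_zeros[OF P deg_Pb])
    show "\<forall>z\<in>g ` J. z \<noteq> (0, 0)" using gnz by auto
    show "\<forall>z\<in>g ` J. \<forall>w\<in>g ` J. \<forall>c. w = (c * fst z, c * snd z) \<longrightarrow> w = z" by (rule npset[OF Jq])
    show "\<forall>z\<in>g ` J. hom (r - 1) (Pb A u) z = 0"
    proof
      fix w assume "w \<in> g ` J"
      then obtain k where kk: "k < m" "k \<noteq> k0" "w = g (u + e*k)" unfolding J_def by auto
      have cz: "cw A (u*m+k) = 0" using z kk(1) kk(2) by blast
      have "c0^(k*(t-1)) * hom (r-1) (Pb A u) w = 0" using cz unfolding block_eval[OF u kk(1)] kk(3) .
      then show "hom (r - 1) (Pb A u) w = 0" using c0 by simp
    qed
  qed
  moreover have "card (g ` J) = r" using cJ inj_on_subset[OF inj_g Jq] by (simp add: card_image)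
  ultimately show False using r1 by simp
qed

lemma loc:
  assumes u: "u < s" and k0: "k0 < m" and z: "\<forall>k<m. k \<noteq> k0 \<longrightarrow> cw A (u*m+k) = 0"
  shows "cw A (u*m+k0) = 0"
  using block_eval[OF u k0] block_zero[OF u k0 z] by (simp add: hom_0)


lemma e_not_dvd1: "\<not> e dvd 1" using e2 by auto

lemma G1_zero: "G1v j = 0 \<Longrightarrow> e dvd j"
proof -
  assume "G1v j = 0"
  then have "\<exists>k\<in>{..<m}. snd (g (e*k + j)) = 0" unfolding G1v_def
    by (metis (no_types, lifting) finite_lessThan prod_zero_iff)
  then obtain k where "k < m" "snd (g (e*k + j)) = 0" by blast
  then have "e dvd e*k + j" using gsnd edvd by blast
  then show "e dvd j" by (simp add: dvd_add_right_iff)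
qed

lemma G2_zero: "G2v j = 0 \<Longrightarrow> e dvd 1 + j"
proof -
  assume "G2v j = 0"
  then have "\<exists>k\<in>{..<m}. snd (g (e*k + 1 + j)) = 0" unfolding G2v_def
    by (metis (no_types, lifting) finite_lessThan prod_zero_iff)
  then obtain k where "k < m" "snd (g (e*k + 1 + j)) = 0" by blast
  then have "e dvd e*k + (1 + j)" using gsnd edvd by (metis add.assoc)
  then show "e dvd 1 + j" by (metis dvd_add_right_iff dvd_triv_left)
qed

lemma Gnz: "(G1v j, G2v j) \<noteq> (0,0)"
proof
  assume "(G1v j, G2v j) = (0,0)"
  then have "e dvd j" "e dvd 1 + j" using G1_zero G2_zero by auto
  then have "e dvd (1 + j) - j" by (metis dvd_diff_nat)
  then show False using e2 by simp
qed

lemma G1_0: "G1v 0 = 0"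
proof -
  have h: "snd (g (e*0 + 0)) = 0" using gsnd by simp
  show ?thesis unfolding G1v_def
    apply (rule prod_zero) apply simp apply (rule bexI[of _ 0]) using h by auto
qed

lemma G2_q: "G2v q = 0"
proof -
  have h: "snd (g (e*0 + 1 + q)) = 0" using gsnd by simp
  show ?thesis unfolding G2v_def
    apply (rule prod_zero) apply simp apply (rule bexI[of _ 0]) using h by auto
qed

lemma G2_0: "G2v 0 \<noteq> 0"
proof
  assume "G2v 0 = 0"
  then have "e dvd 1 + 0" by (rule G2_zero)
  then show False using e2 by simp
qed

lemma G1_q: "G1v q \<noteq> 0"
proof
  assume "G1v q = 0"
  then have "e dvd q" using G1_zero by simp
  moreover have "e dvd q + 1" using qe by simp
  ultimately have "e dvd (q + 1) - q" by (metis dvd_diff_nat)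
  then show False using e2 by simp
qed

lemma Gnp:
  assumes u: "u < e" and u': "u' < e" and ne: "u \<noteq> u'"
    and p1: "G1v u = lam * G1v u'" and p2: "G2v u = lam * G2v u'"
  shows False
proof -
  define H where "H = smult (G2v u') g1 + smult (- G1v u') g2"
  have dH: "degree H \<le> m"
    unfolding H_def using deg_g1 deg_g2 degree_add_le degree_smult_le order_trans by metis
  have hH: "hom m H (g j) = G2v u' * G1v j - G1v u' * G2v j" for j
    unfolding H_def hom_add hom_smult hom_g1 hom_g2 by simp
  define J1 where "J1 = (\<lambda>k. u + e*k) ` {..<m}"
  define J2 where "J2 = (\<lambda>k. u' + e*k) ` {..<m}"
  have J1q: "J1 \<subseteq> {..<q+1}" unfolding J1_def using blk_lt[OF u] by auto
  have J2q: "J2 \<subseteq> {..<q+1}" unfolding J2_def using blk_lt[OF u'] by auto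
  have dis: "J1 \<inter> J2 = {}" unfolding J1_def J2_def using blk_eq(1)[OF u u'] ne by auto
  have cJ: "card (J1 \<union> J2) = m + m"
    using dis by (simp add: card_Un_disjoint J1_def J2_def blk_card[OF u] blk_card[OF u'])
  have Jq: "J1 \<union> J2 \<subseteq> {..<q+1}" using J1q J2q by simp
  have H0: "H = 0"
  proof (rule ccontr)
    assume "H \<noteq> 0"
    have "card (g ` (J1 \<union> J2)) \<le> m"
    proof (rule hom_zeros[OF \<open>H \<noteq> 0\<close> dH])
      show "\<forall>z\<in>g ` (J1 \<union> J2). z \<noteq> (0, 0)" using gnz by auto
      show "\<forall>z\<in>g ` (J1 \<union> J2). \<forall>w\<in>g ` (J1 \<union> J2). \<forall>c. w = (c * fst z, c * snd z) \<longrightarrow> w = z"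
        by (rule npset[OF Jq])
      show "\<forall>z\<in>g ` (J1 \<union> J2). hom m H z = 0"
      proof
        fix z assume zJ: "z \<in> g ` (J1 \<union> J2)"
        have "z \<in> g ` J1 \<or> z \<in> g ` J2" using zJ by blast
        then show "hom m H z = 0"
        proof
          assume "z \<in> g ` J1"
          then obtain k where k: "z = g (u + e*k)" unfolding J1_def by blast
          have s1: "G1v (u + e*k) = c0^k * (lam * G1v u')" "G2v (u + e*k) = c0^k * (lam * G2v u')"
            using G_shiftk[of u k] p1 p2 by auto
          show ?thesis unfolding k hH s1 by (simp add: algebra_simps)
        next
          assume "z \<in> g ` J2"
          then obtain k where k: "z = g (u' + e*k)" unfolding J2_def by blast
          have s2: "G1v (u' + e*k) = c0^k * G1v u'" "G2v (u' + e*k) = c0^k * G2v u'"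
            using G_shiftk[of u' k] by auto
          show ?thesis unfolding k hH s2 by (simp add: algebra_simps)
        qed
      qed
    qed
    moreover have "card (g ` (J1 \<union> J2)) = m + m"
      using cJ inj_on_subset[OF inj_g Jq] by (simp add: card_image)
    ultimately show False by simp
  qed
  have "hom m H (g 0) = 0" "hom m H (g q) = 0" using H0 by (simp_all add: hom_0)
  then have "G1v u' * G2v 0 = 0" "G2v u' * G1v q = 0" unfolding hH G1_0 G2_q by simp_all
  then have "G1v u' = 0" "G2v u' = 0" using G2_0 G1_q by simp_all
  then show False using Gnz[of u'] by simp
qed

lemma cw_inj:
  assumes z: "\<forall>j. cw A j = 0"
  shows "\<forall>p\<in>Iset. A p = 0"
proof -
  have bz: "beta A u i = 0" if "u < s" "i < r" for u i
  proof -
    have "Pb A u = 0" using block_zero[OF that(1), of 0] z by simp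
    then show ?thesis using coeff_Pb[OF that(2), of A u] by simp
  qed
  have "A (i,l) = 0" if i: "i < r" and l: "l < t" for i l
  proof -
    define Q where "Q = (\<Sum>l<t. smult (A (i,l)) (monom 1 l))"
    have dQ: "degree Q \<le> t - 1"
      unfolding Q_def
    proof (rule degree_sum_le)
      fix l assume "l \<in> {..<t}"
      then have "degree (monom (1::'a) l) \<le> t - 1" by (simp add: degree_monom_eq)
      then show "degree (smult (A (i,l)) (monom 1 l)) \<le> t - 1"
        using degree_smult_le order_trans by blast
    qed simp
    have hQ: "hom (t-1) Q (G1v u, G2v u) = beta A u i" for u
      unfolding Q_def hom_sum hom_smult beta_def
      by (intro sum.cong refl) (simp add: hom_monom algebra_simps)
    define W where "W = (\<lambda>u. (G1v u, G2v u)) ` {..<s}"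
    have injW: "inj_on (\<lambda>u. (G1v u, G2v u)) {..<s}"
    proof (rule inj_onI)
      fix u u' assume "u \<in> {..<s}" "u' \<in> {..<s}" "(G1v u, G2v u) = (G1v u', G2v u')"
      then show "u = u'" using Gnp[of u u' 1] es by fastforce
    qed
    have Q0: "Q = 0"
    proof (rule ccontr)
      assume "Q \<noteq> 0"
      have "card W \<le> t - 1"
      proof (rule hom_zeros[OF \<open>Q \<noteq> 0\<close> dQ])
        show "\<forall>z\<in>W. z \<noteq> (0, 0)" unfolding W_def using Gnz by auto
        show "\<forall>z\<in>W. \<forall>w\<in>W. \<forall>c. w = (c * fst z, c * snd z) \<longrightarrow> w = z"
        proof (intro ballI allI impI)
          fix z w c assume zW: "z \<in> W" and wW: "w \<in> W" and e: "w = (c * fst z, c * snd z)"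
          obtain u where u: "u < s" "z = (G1v u, G2v u)" using zW unfolding W_def by auto
          obtain u' where u': "u' < s" "w = (G1v u', G2v u')" using wW unfolding W_def by auto
          have "G1v u' = c * G1v u" "G2v u' = c * G2v u" using e u u' by simp_all
          then have "u' = u" using Gnp[of u' u c] u u' es by fastforce
          then show "w = z" using u u' by simp
        qed
        show "\<forall>z\<in>W. hom (t - 1) Q z = 0" unfolding W_def using hQ bz i by auto
      qed
      moreover have "card W = s" unfolding W_def using injW by (simp add: card_image)
      ultimately show False using ts t1 by simp
    qed
    have "coeff Q l = A (i,l)"
    proof -
      have "coeff Q l = (\<Sum>l'<t. if l' = l then A (i,l') else 0)"
        unfolding Q_def coeff_sum by (intro sum.cong) (auto simp: coeff_monom)
      then show ?thesis using l by simp
    qed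
    then show ?thesis using Q0 by simp
  qed
  then show ?thesis by (auto simp: Iset_def)
qed

lemma dist:
  assumes nz: "\<exists>j. cw A j \<noteq> 0"
  shows "s*m - D \<le> card {j. j < s*m \<and> cw A j \<noteq> 0}"
proof -
  have F: "FP A \<noteq> 0"
  proof
    assume F0: "FP A = 0"
    have "cw A j = 0" for j by (simp add: cw_eval hom_0 F0)
    then show False using nz by blast
  qed
  define Zs where "Zs = {j. j < s*m \<and> hom D (FP A) (pt j) = 0}"
  define idx where "idx j = j div m + e * (j mod m)" for j
  have ptg: "pt ` Zs = g ` (idx ` Zs)" unfolding pt_def idx_def by (simp add: image_image)
  have Jq: "idx ` Zs \<subseteq> {..<q+1}" unfolding Zs_def idx_def using idx_lt by auto
  have "card (pt ` Zs) \<le> D"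
    unfolding ptg
  proof (rule hom_zeros[OF F deg_FP])
    show "\<forall>z\<in>g ` idx ` Zs. z \<noteq> (0, 0)" using gnz by auto
    show "\<forall>z\<in>g ` idx ` Zs. \<forall>w\<in>g ` idx ` Zs. \<forall>c. w = (c * fst z, c * snd z) \<longrightarrow> w = z"
      by (rule npset[OF Jq])
    show "\<forall>z\<in>g ` idx ` Zs. hom D (FP A) z = 0"
    proof
      fix z assume "z \<in> g ` idx ` Zs"
      then have "z \<in> pt ` Zs" using ptg by simp
      then obtain j where j: "j \<in> Zs" "z = pt j" by blast
      then show "hom D (FP A) z = 0" unfolding Zs_def by simp
    qed
  qed
  moreover have "card (pt ` Zs) = card Zs"
    by (rule card_image, rule inj_on_subset[OF pt_inj]) (auto simp: Zs_def)
  ultimately have cZ: "card Zs \<le> D" by simp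
  have "{j. j < s*m \<and> cw A j \<noteq> 0} = {..<s*m} - Zs"
    unfolding Zs_def by (auto simp: cw_eval)
  moreover have "card ({..<s*m} - Zs) = s*m - card Zs"
    by (subst card_Diff_subset) (auto simp: Zs_def)
  ultimately show ?thesis using cZ by simp
qed


lemma sum_fun_apply: "(\<Sum>p\<in>P. f p) j = (\<Sum>p\<in>P. f p j)"
  for f :: "'b \<Rightarrow> nat \<Rightarrow> 'c::comm_monoid_add"
  by (induct P rule: infinite_finite_induct) auto

definition Sset where "Sset = (\<lambda>p. basis (fst p) (snd p)) ` Iset"

lemma cw_add: "cw A + cw B = cw (\<lambda>p. A p + B p)"
  by (rule ext) (simp add: cw_def sum.distrib algebra_simps)

lemma cw_scl: "scl c (cw A) = cw (\<lambda>p. c * A p)"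
  by (rule ext) (simp add: cw_def scl_def sum_distrib_left algebra_simps)

lemma cw_zero: "cw (\<lambda>p. 0) = 0"
  by (rule ext) (simp add: cw_def)

lemma basis_cw: assumes "p \<in> Iset" shows "basis (fst p) (snd p) = cw (\<lambda>p'. if p' = p then 1 else 0)"
proof (rule ext)
  fix j
  have "cw (\<lambda>p'. if p' = p then 1 else 0) j = (\<Sum>p'\<in>Iset. if p' = p then basis (fst p) (snd p) j else 0)"
    unfolding cw_def by (intro sum.cong) auto
  also have "... = basis (fst p) (snd p) j" using assms by (simp add: Iset_def)
  finally show "basis (fst p) (snd p) j = cw (\<lambda>p'. if p' = p then 1 else 0) j" by simp
qed

lemma finite_Iset: "finite Iset" by (simp add: Iset_def)

lemma basis_inj: "inj_on (\<lambda>p. basis (fst p) (snd p)) Iset"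
proof (rule inj_onI)
  fix p p' assume p: "p \<in> Iset" and p': "p' \<in> Iset" and e: "basis (fst p) (snd p) = basis (fst p') (snd p')"
  show "p = p'"
  proof (rule ccontr)
    assume ne: "p \<noteq> p'"
    define A where "A = (\<lambda>x. (if x = p then 1 else 0) + (- 1) * (if x = p' then 1 else (0::'a)))"
    have "cw A = cw (\<lambda>x. if x = p then 1 else 0) + scl (- 1) (cw (\<lambda>x. if x = p' then 1 else 0))"
      unfolding cw_scl cw_add A_def ..
    also have "... = 0" using e basis_cw[OF p] basis_cw[OF p'] by (simp add: scl_def fun_eq_iff)
    finally have "\<forall>j. cw A j = 0" by simp
    then have "A p = 0" using cw_inj p by blast
    then show False using ne by (simp add: A_def)
  qed
qed

lemma sum_basis: "(\<Sum>p\<in>Iset. scl (A p) (basis (fst p) (snd p))) = cw A"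
  by (rule ext) (simp add: sum_fun_apply cw_def scl_def)

lemma span_cw: "v \<in> module.span scl Sset \<Longrightarrow> \<exists>A. v = cw A"
proof -
  interpret V: vector_space scl by (rule vector_space_scl)
  assume "v \<in> V.span Sset"
  then show ?thesis
  proof (induct rule: V.span_induct_alt)
    case base
    then show ?case using cw_zero by metis
  next
    case (step c x y)
    obtain p where p: "p \<in> Iset" "x = basis (fst p) (snd p)" using step(1) unfolding Sset_def by blast
    obtain B where B: "y = cw B" using step(2) by blast
    have "scl c x + y = cw (\<lambda>p'. c * (if p' = p then 1 else 0)) + cw B"
      using p basis_cw cw_scl B by simp
    also have "... = cw (\<lambda>p'. c * (if p' = p then 1 else 0) + B p')" by (rule cw_add)
    finally show ?case by blast
  qed
qed

lemma indep: "\<not> module.dependent scl Sset"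
proof -
  interpret V: vector_space scl by (rule vector_space_scl)
  have fin: "finite Sset" unfolding Sset_def using finite_Iset by simp
  show ?thesis unfolding V.dependent_finite[OF fin]
  proof (rule notI)
    assume "\<exists>u. (\<exists>v\<in>Sset. u v \<noteq> 0) \<and> (\<Sum>v\<in>Sset. scl (u v) v) = 0"
    then obtain c v where v: "v \<in> Sset" "c v \<noteq> 0" and h: "(\<Sum>v\<in>Sset. scl (c v) v) = 0"
      by blast
    define A where "A p = c (basis (fst p) (snd p))" for p
    have "(\<Sum>v\<in>Sset. scl (c v) v) = (\<Sum>p\<in>Iset. scl (A p) (basis (fst p) (snd p)))"
      unfolding Sset_def A_def by (subst sum.reindex[OF basis_inj]) simp
    then have "cw A = 0" using h sum_basis by simp
    then have "\<forall>p\<in>Iset. A p = 0" using cw_inj by simp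
    then have "\<forall>v\<in>Sset. c v = 0" unfolding Sset_def A_def by auto
    then show False using v by blast
  qed
qed

lemma card_Sset: "card Sset = r * t"
  unfolding Sset_def using card_image[OF basis_inj] by (simp add: Iset_def card_cartesian_product)

lemma arith_target: "s * (r + 1) + 1 - r * t - t + 1 \<le> s*m - D"
proof -
  obtain R where R: "r = Suc R" using r1 by (cases r) auto
  obtain T where T: "t = Suc T" using t1 by (cases t) auto
  obtain S where S: "s = t + S" using ts le_Suc_ex by blast
  have h0: "s*m = (r - 1) + m*(t-1) + ((r+1)*S + 2)" unfolding R T S by (simp add: algebra_simps)
  have h1: "s*m = D + ((r+1)*S + 2)" using h0 by (simp add: D_def)
  have h2: "s * (r + 1) + 1 = r*t + t + ((r+1)*S + 1)" unfolding R T S by (simp add: algebra_simps)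
  show ?thesis using h1 h2 by simp
qed

end

theorem mainTheorem5:
  fixes q r s t :: nat
  assumes "card (UNIV :: 'a::{finite,field} set) = q"
    and "r \<ge> 1" and "(r + 1) dvd (q + 1)"
    and "2 \<le> s" and "s \<le> (q + 1) div (r + 1)"
    and "1 \<le> t" and "t \<le> s"
  shows "\<exists>C :: (nat \<Rightarrow> 'a) set.
           linear_code (s * (r + 1) + 1) C \<and>
           code_dim C = r * t \<and>
           has_locality (s * (r + 1) + 1) r C \<and>
           min_dist (s * (r + 1) + 1) C \<ge> s * (r + 1) + 1 - r * t - t + 1"
proof -
  obtain a b :: 'a and g and c0 :: 'a where st: "c0 \<noteq> 0" "\<forall>i j. g (i+j) = kmul a b (g i) (g j)"
     "\<forall>j. snd (g j) = 0 \<longleftrightarrow> (q+1) dvd j"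
     "\<forall>j. g (j + (q+1)) = (c0 * fst (g j), c0 * snd (g j))"
     "\<forall>i j c. i < j \<longrightarrow> j < q+1 \<longrightarrow> g j \<noteq> (c * fst (g i), c * snd (g i))"
     "\<forall>j. g j \<noteq> (0,0)"
    using struct_exists[OF assms(1)] by blast
  interpret X: cons a b c0 g q r s t
    apply (unfold_locales)
    apply (rule st(1))
    apply (rule st(2)[rule_format])
    apply (rule st(3)[rule_format])
    apply (rule st(4)[rule_format])
    using st(5) apply blast
    apply (rule st(6)[rule_format])
    apply (rule assms(2)) apply (rule assms(3)) apply (rule assms(4)) apply (rule assms(5))
    apply (rule assms(6)) apply (rule assms(7))
    done
  interpret V: vector_space scl by (rule vector_space_scl)
  define n where "n = s * (r + 1) + 1"
  define C where "C = V.span X.Sset"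
  have sp: "\<exists>A. v = X.cw A" if "v \<in> C" for v using X.span_cw that unfolding C_def by blast
  have lin: "linear_code n C"
    unfolding linear_code_def
  proof (intro conjI ballI allI impI)
    show "V.subspace C" unfolding C_def by simp
    fix v i assume "v \<in> C" "n \<le> i"
    then obtain A where "v = X.cw A" using sp by blast
    then show "v i = 0" using X.cw_beyond \<open>n \<le> i\<close> unfolding n_def by simp
  qed
  have dim: "code_dim C = r * t"
    unfolding code_dim_def C_def using V.dim_span_eq_card_independent[OF X.indep] X.card_Sset by simp
  have dif: "\<exists>A. (\<lambda>j. x j - y j) = X.cw A" if "x \<in> C" "y \<in> C" for x y
  proof -
    have "x - y \<in> C" unfolding C_def using that unfolding C_def by (intro V.span_diff)
    then obtain A where "x - y = X.cw A" using sp by blast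
    then show ?thesis by (auto simp: fun_eq_iff)
  qed
  have loc: "has_locality n r C"
    unfolding has_locality_def
  proof (intro allI impI)
    fix i assume i: "i < n"
    show "\<exists>I. I \<subseteq> {0..<n} - {i} \<and> card I \<le> r \<and> (\<forall>x\<in>C. \<forall>y\<in>C. (\<forall>j\<in>I. x j = y j) \<longrightarrow> x i = y i)"
    proof (cases "i < s * (r+1)")
      case False
      then have i': "i = s*(r+1)" using i unfolding n_def by simp
      show ?thesis
      proof (intro exI[of _ "{}"] conjI ballI impI)
        fix x y assume "x \<in> C" "y \<in> C"
        then obtain A B where "x = X.cw A" "y = X.cw B" using sp by blast
        then show "x i = y i" using X.cw_beyond i' by simp
      qed simp_all
    next
      case True
      define u where "u = i div (r+1)"
      define k0 where "k0 = i mod (r+1)"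
      have u: "u < s" using True unfolding u_def by (simp add: div_less_iff_less_mult)
      have k0: "k0 < r+1" unfolding k0_def by simp
      have ii: "i = u*(r+1) + k0" unfolding u_def k0_def by (metis div_mult_mod_eq)
      define I where "I = (\<lambda>k. u*(r+1) + k) ` ({..<r+1} - {k0})"
      show ?thesis
      proof (intro exI[of _ I] conjI ballI impI)
        show "I \<subseteq> {0..<n} - {i}"
        proof
          fix j assume "j \<in> I"
          then obtain k where k: "k < r+1" "k \<noteq> k0" "j = u*(r+1) + k" unfolding I_def by blast
          have "j < s*(r+1)" using X.pt_block(1)[OF u k(1)] k(3) by simp
          moreover have "j \<noteq> i" using k ii by simp
          ultimately show "j \<in> {0..<n} - {i}" unfolding n_def by simp
        qed
        show "card I \<le> r" unfolding I_def
          using card_image_le[of "{..<r+1} - {k0}" "\<lambda>k. u*(r+1) + k"] k0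
          by (simp add: card_Diff_singleton)
        fix x y assume x: "x \<in> C" and y: "y \<in> C" and agree: "\<forall>j\<in>I. x j = y j"
        obtain A where A: "(\<lambda>j. x j - y j) = X.cw A" using dif[OF x y] by blast
        have "\<forall>k<r+1. k \<noteq> k0 \<longrightarrow> X.cw A (u*(r+1)+k) = 0"
        proof (intro allI impI)
          fix k assume "k < r+1" "k \<noteq> k0"
          then have "u*(r+1)+k \<in> I" unfolding I_def by blast
          then have "x (u*(r+1)+k) - y (u*(r+1)+k) = 0" using agree by simp
          then show "X.cw A (u*(r+1)+k) = 0" using A by metis
        qed
        then have "X.cw A i = 0" using X.loc[OF u k0] ii by simp
        then have "x i - y i = 0" using A by metis
        then show "x i = y i" by simp
      qed
    qed
  qed
  have md: "s * (r + 1) + 1 - r * t - t + 1 \<le> min_dist n C"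
  proof -
    define M where "M = {hamming_dist n x y | x y. x \<in> C \<and> y \<in> C \<and> x \<noteq> y}"
    have "M \<subseteq> {..n}"
    proof
      fix h assume "h \<in> M"
      then obtain x y :: "nat \<Rightarrow> 'a" where "h = hamming_dist n x y" unfolding M_def by blast
      moreover have "card {i \<in> {0..<n}. x i \<noteq> y i} \<le> card {0..<n}" by (rule card_mono) auto
      ultimately have "h \<le> card {0..<n}" unfolding hamming_dist_def by simp
      then show "h \<in> {..n}" by simp
    qed
    then have finM: "finite M" by (rule finite_subset) simp
    define p where "p = (0::nat, 0::nat)"
    have p: "p \<in> X.Iset" using X.r1 X.t1 unfolding X.Iset_def p_def by simp
    have bC: "X.basis (fst p) (snd p) \<in> C"
      unfolding C_def X.Sset_def using p by (intro V.span_base) blast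
    have bnz: "X.basis (fst p) (snd p) \<noteq> 0"
    proof
      assume b0: "X.basis (fst p) (snd p) = 0"
      have "0 \<in> X.Sset" unfolding X.Sset_def
        using image_eqI[where f="\<lambda>p. X.basis (fst p) (snd p)" and x=p and b=0 and A=X.Iset] p b0 by simp
      then show False using V.dependent_zero X.indep by blast
    qed
    have "0 \<in> C" unfolding C_def by (rule V.span_zero)
    then have "hamming_dist n (X.basis (fst p) (snd p)) 0 \<in> M" unfolding M_def
      using bC bnz by (intro CollectI exI[of _ "X.basis (fst p) (snd p)"] exI[of _ 0]) simp
    then have "M \<noteq> {}" by blast
    moreover have "s * (r + 1) + 1 - r * t - t + 1 \<le> h" if hM: "h \<in> M" for h
    proof -
      obtain x y where xy: "x \<in> C" "y \<in> C" "x \<noteq> y" "h = hamming_dist n x y" using hM unfolding M_def by blast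
      obtain A where A: "(\<lambda>j. x j - y j) = X.cw A" using dif[OF xy(1,2)] by blast
      have "\<exists>j. X.cw A j \<noteq> 0"
      proof (rule ccontr)
        assume "\<not> (\<exists>j. X.cw A j \<noteq> 0)"
        then have "\<forall>j. x j - y j = 0" using A by (metis)
        then show False using xy(3) by (simp add: fun_eq_iff)
      qed
      then have d: "s*(r+1) - X.D \<le> card {j. j < s*(r+1) \<and> X.cw A j \<noteq> 0}" by (rule X.dist)
      have "{j. j < s*(r+1) \<and> X.cw A j \<noteq> 0} \<subseteq> {i \<in> {0..<n}. x i \<noteq> y i}"
      proof
        fix j assume "j \<in> {j. j < s*(r+1) \<and> X.cw A j \<noteq> 0}"
        then have "j < s*(r+1)" "x j - y j \<noteq> 0" using A by (auto dest: fun_cong[of _ _ j])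
        then show "j \<in> {i \<in> {0..<n}. x i \<noteq> y i}" unfolding n_def by simp
      qed
      then have "card {j. j < s*(r+1) \<and> X.cw A j \<noteq> 0} \<le> h"
        unfolding xy(4) hamming_dist_def by (intro card_mono) auto
      then show ?thesis using d X.arith_target by simp
    qed
    ultimately show ?thesis unfolding min_dist_def M_def[symmetric] using finM by (simp add: Min_ge_iff)
  qed
  show ?thesis
    by (rule exI[of _ C]) (use lin dim loc md in \<open>simp add: n_def\<close>)
qed

end
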